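(* Let $\beta_U,\beta_H,\beta_R\ge 0$ with $\beta_U>0$, $\beta_H+\beta_R>0$ and $\beta_U+\beta_H+\beta_R=1$, and let $\gamma\in[0,1]$. For $x\in[0,1]$ put $p(x)=\beta_U+x\beta_R$ and $$E[R_r](x)=\frac{\beta_R}{\beta_R+\beta_H}\,(1-p(x))+\frac{(1-x)\beta_R}{\beta_H+(1-x)\beta_R}\,(1-p(x))\,\gamma+\frac{x\beta_R}{x\beta_R+\beta_U}\,p(x),$$ where any term whose denominator is $0$ is read as $0$. Then for all $x\in[0,1]$, $$E[R_r](x)=\beta_R\Big(1+\gamma+\Big(\frac{\beta_H}{\beta_H+\beta_R}-\gamma\Big)x\Big).$$ In particular, when $\beta_R>0$, the maximum of $E[R_r]$ over $x\in[0,1]$ is attained only at $x=1$ if $\gamma<\frac{\beta_H}{1-\beta_U}$, and only at $x=0$ if $\gamma>\frac{\beta_H}{1-\beta_U}$.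
   Context: Model of an undercutting attack with safe depth $D=1$ (the undercutter abandons its fork once it is one block behind). Miners are split into an undercutter with mining-power fraction $\beta_U$, honest miners with total fraction $\beta_H$, and the remaining rational (non-undercutting) miners with total fraction $\beta_R$. Fees are normalized so the main-chain block being undercut holds fee $1$, the next main-chain block and the undercutter's first fork block each hold $\gamma$, and the second fork block holds $1$. A fraction $x$ of the rational mining power moves to the fork after the fork and the main chain tie at one block each; $p(x)$ is the probability that the fork wins. $E[R_r](x)$ is the rational miners' expected fee revenue. *)

theory Defs
  imports Complex_Main
begin

text \<open>Probability that the fork wins, when a fraction x of rational power moves to the fork.\<close>
definition p_fork :: "real \<Rightarrow> real \<Rightarrow> real \<Rightarrow> real" where
  "p_fork bU bR x = bU + x * bR"

text \<open>Expected fee revenue of rational miners. Division by zero yields 0 in Isabelle/HOL,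
  which matches the convention that a term with zero denominator is read as 0.\<close>
definition ER_r :: "real \<Rightarrow> real \<Rightarrow> real \<Rightarrow> real \<Rightarrow> real \<Rightarrow> real" where
  "ER_r bU bH bR \<gamma> x =
     bR / (bR + bH) * (1 - p_fork bU bR x)
   + ((1 - x) * bR) / (bH + (1 - x) * bR) * (1 - p_fork bU bR x) * \<gamma>
   + (x * bR) / (x * bR + bU) * p_fork bU bR x"

end

theory Submission
  imports Defs
begin

lemma closed:
  fixes bU bH bR \<gamma> x :: real
  assumes "bU \<ge> 0" "bH \<ge> 0" "bR \<ge> 0" "bU > 0" "bH + bR > 0" "bU + bH + bR = 1"
    and "0 \<le> x" "x \<le> 1"
  shows "ER_r bU bH bR \<gamma> x = bR * (1 + \<gamma> + (bH / (bH + bR) - \<gamma>) * x)"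
proof -
  have p1: "1 - p_fork bU bR x = bH + (1 - x) * bR" using assms unfolding p_fork_def by (simp add: algebra_simps)
  have t2: "((1 - x) * bR) / (bH + (1 - x) * bR) * (bH + (1 - x) * bR) = (1 - x) * bR"
  proof (cases "bH + (1 - x) * bR = 0")
    case True
    have "(1 - x) * bR \<ge> 0" using assms by simp
    then have "(1 - x) * bR = 0" using True assms by linarith
    then show ?thesis by simp
  qed simp
  have pp: "x * bR + bU > 0" using assms by (simp add: add_nonneg_pos)
  have t3: "(x * bR) / (x * bR + bU) * p_fork bU bR x = x * bR"
    using pp unfolding p_fork_def by (simp add: add.commute)
  have "ER_r bU bH bR \<gamma> x = bR / (bR + bH) * (bH + (1 - x) * bR) + (1 - x) * bR * \<gamma> + x * bR"
    unfolding ER_r_def p1 t3 using t2 by (metis mult.commute mult.left_commute)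
  also have "\<dots> = bR * (1 + \<gamma> + (bH / (bH + bR) - \<gamma>) * x)"
    using assms(5) by (simp add: field_simps add.commute)
  finally show ?thesis .
qed

theorem mainTheorem1:
  fixes bU bH bR \<gamma> :: real
  assumes "bU \<ge> 0" "bH \<ge> 0" "bR \<ge> 0" "bU > 0" "bH + bR > 0" "bU + bH + bR = 1"
    and "0 \<le> \<gamma>" "\<gamma> \<le> 1"
  shows "(\<forall>x\<in>{0..1}. ER_r bU bH bR \<gamma> x = bR * (1 + \<gamma> + (bH / (bH + bR) - \<gamma>) * x))
       \<and> (bR > 0 \<longrightarrow>
            (\<gamma> < bH / (1 - bU) \<longrightarrow>
               {y\<in>{0..1}. \<forall>x\<in>{0..1}. ER_r bU bH bR \<gamma> x \<le> ER_r bU bH bR \<gamma> y} = {1})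
          \<and> (\<gamma> > bH / (1 - bU) \<longrightarrow>
               {y\<in>{0..1}. \<forall>x\<in>{0..1}. ER_r bU bH bR \<gamma> x \<le> ER_r bU bH bR \<gamma> y} = {0}))"
proof -
  have C: "\<And>x. x \<in> {0..1} \<Longrightarrow> ER_r bU bH bR \<gamma> x = bR * (1 + \<gamma> + (bH / (bH + bR) - \<gamma>) * x)"
    using closed assms by auto
  have e: "1 - bU = bH + bR" using assms by linarith
  define s where "s = bH / (bH + bR) - \<gamma>"
  have C2: "\<And>x. x \<in> {0..1} \<Longrightarrow> ER_r bU bH bR \<gamma> x = bR * (1 + \<gamma>) + (bR * s) * x"
    using C unfolding s_def by (simp add: algebra_simps)
  show ?thesis
  proof (intro conjI impI ballI)
    show "\<And>x. x \<in> {0..1} \<Longrightarrow> ER_r bU bH bR \<gamma> x = bR * (1 + \<gamma> + (bH / (bH + bR) - \<gamma>) * x)" by (rule C)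
  next
    assume r: "bR > 0" and g: "\<gamma> < bH / (1 - bU)"
    have k: "bR * s > 0" using r g e unfolding s_def by simp
    show "{y\<in>{0..1}. \<forall>x\<in>{0..1}. ER_r bU bH bR \<gamma> x \<le> ER_r bU bH bR \<gamma> y} = {1}"
    proof (rule set_eqI, rule iffI)
      fix y assume "y \<in> {y\<in>{0..1}. \<forall>x\<in>{0..1}. ER_r bU bH bR \<gamma> x \<le> ER_r bU bH bR \<gamma> y}"
      then have y: "y \<in> {0..1}" and "ER_r bU bH bR \<gamma> 1 \<le> ER_r bU bH bR \<gamma> y" by auto
      then have "(bR * s) * 1 \<le> (bR * s) * y" using C2[of 1] C2[of y] by simp
      then have "1 \<le> y" using k by (metis mult.right_neutral mult_le_cancel_left_pos)
      then show "y \<in> {1}" using y by simp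
    next
      fix y assume "y \<in> {1::real}"
      then show "y \<in> {y\<in>{0..1}. \<forall>x\<in>{0..1}. ER_r bU bH bR \<gamma> x \<le> ER_r bU bH bR \<gamma> y}"
        using C2 k by (auto simp: mult_left_le)
    qed
  next
    assume r: "bR > 0" and g: "\<gamma> > bH / (1 - bU)"
    have k: "bR * s < 0" using r g e unfolding s_def by (simp add: mult_pos_neg)
    show "{y\<in>{0..1}. \<forall>x\<in>{0..1}. ER_r bU bH bR \<gamma> x \<le> ER_r bU bH bR \<gamma> y} = {0}"
    proof (rule set_eqI, rule iffI)
      fix y assume "y \<in> {y\<in>{0..1}. \<forall>x\<in>{0..1}. ER_r bU bH bR \<gamma> x \<le> ER_r bU bH bR \<gamma> y}"
      then have y: "y \<in> {0..1}" and "ER_r bU bH bR \<gamma> 0 \<le> ER_r bU bH bR \<gamma> y" by auto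
      then have "(bR * s) * 0 \<le> (bR * s) * y" using C2[of 0] C2[of y] by simp
      then have "y \<le> 0" using k by (smt (verit) mult_neg_pos mult_zero_right)
      then show "y \<in> {0}" using y by simp
    next
      fix y assume "y \<in> {0::real}"
      then show "y \<in> {y\<in>{0..1}. \<forall>x\<in>{0..1}. ER_r bU bH bR \<gamma> x \<le> ER_r bU bH bR \<gamma> y}"
        using C2 k by (auto simp: mult_nonpos_nonneg less_imp_le)
    qed
  qed
qed

end
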